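(* Let $n \ge 3$, let $x_1 < x_2 < \cdots < x_n$ and $y_1 < y_2 < \cdots < y_n$ be real numbers, and let $A = [e^{x_i y_j}]_{i,j=1,\ldots,n}$. Define $u_j := y_{j+1} - y_1$ for $j=1,\ldots,n-1$, and $s(\mathbf{x}) := x_1+\cdots+x_n$. Then $$\det(A) = e^{s(\mathbf{x}) y_1}\, u_1 u_2\cdots u_{n-1} \int_{x_{n-1}}^{x_n}\cdots\int_{x_2}^{x_3}\int_{x_1}^{x_2} \det(B)\, dt_1\, dt_2\cdots dt_{n-1},$$ where $B$ is the $(n-1)\times(n-1)$ matrix $B = [e^{t_i u_j}]_{i,j=1,\ldots,n-1}$ (depending on the integration variables $t_1,\ldots,t_{n-1}$, with $t_k$ ranging over $[x_k,x_{k+1}]$). *)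

theory Defs
  imports "HOL-Analysis.Analysis" "Jordan_Normal_Form.Determinant"
begin

text \<open>Iterated integral over the variables t_0,...,t_{m-1} (0-based), with t_k ranging
  over [a k, b k]; the innermost integral is over t_0 and the outermost over t_{m-1}.
  The argument t is the assignment of the already fixed (outer) variables.\<close>
fun iter_integral :: "nat \<Rightarrow> (nat \<Rightarrow> real) \<Rightarrow> (nat \<Rightarrow> real) \<Rightarrow> ((nat \<Rightarrow> real) \<Rightarrow> real) \<Rightarrow> (nat \<Rightarrow> real) \<Rightarrow> real" where
  "iter_integral 0 a b f t = f t"
| "iter_integral (Suc m) a b f t =
     integral {a m..b m} (\<lambda>s. iter_integral m a b f (t(m := s)))"

end

theory Submission
  imports Defs
begin

lemma int_exp:
  fixes a b u :: real
  assumes "a \<le> b" "u \<noteq> 0"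
  shows "((\<lambda>s. exp (s * u)) has_integral (exp (b * u) - exp (a * u)) / u) {a..b}"
proof -
  have "((\<lambda>s. exp (s * u)) has_integral (exp (b * u) / u - exp (a * u) / u)) {a..b}"
  proof (rule fundamental_theorem_of_calculus[OF assms(1)])
    fix s assume "s \<in> {a..b}"
    have "((\<lambda>s. exp (s * u) / u) has_real_derivative (exp (s * u) * u / u)) (at s within {a..b})"
      by (auto intro!: derivative_eq_intros)
    then show "((\<lambda>s. exp (s * u) / u) has_vector_derivative exp (s * u)) (at s within {a..b})"
      using assms(2) by (simp add: has_real_derivative_iff_has_vector_derivative)
  qed
  then show ?thesis by (simp add: diff_divide_distrib)
qed

lemma iter_prod_sum:
  fixes P :: "'p set" and g :: "'p \<Rightarrow> nat \<Rightarrow> real \<Rightarrow> real"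
  assumes "finite P" "m \<le> k" "\<And>p i. p \<in> P \<Longrightarrow> i < k \<Longrightarrow> g p i integrable_on {a i..b i}"
  shows "iter_integral m a b (\<lambda>t. \<Sum>p\<in>P. c p * (\<Prod>i<k. g p i (t i))) t0 =
    (\<Sum>p\<in>P. c p * (\<Prod>i<m. integral {a i..b i} (g p i)) * (\<Prod>i\<in>{m..<k}. g p i (t0 i)))"
  using assms(2)
proof (induction m arbitrary: t0)
  case 0
  then show ?case by (simp add: atLeast0LessThan)
next
  case (Suc m)
  have mk: "m < k" using Suc.prems by simp
  have e: "(\<Prod>i\<in>{m..<k}. g p i ((t0(m := s)) i)) = g p m s * (\<Prod>i\<in>{Suc m..<k}. g p i (t0 i))" for p s
    using mk by (simp add: prod.atLeast_Suc_lessThan)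
  have "iter_integral (Suc m) a b (\<lambda>t. \<Sum>p\<in>P. c p * (\<Prod>i<k. g p i (t i))) t0 =
     integral {a m..b m} (\<lambda>s. \<Sum>p\<in>P. c p * (\<Prod>i<m. integral {a i..b i} (g p i)) * (g p m s * (\<Prod>i\<in>{Suc m..<k}. g p i (t0 i))))"
    by (simp only: iter_integral.simps Suc.IH[OF Suc_leD[OF Suc.prems]] e)
  also have "\<dots> = (\<Sum>p\<in>P. integral {a m..b m} (\<lambda>s. c p * (\<Prod>i<m. integral {a i..b i} (g p i)) * (g p m s * (\<Prod>i\<in>{Suc m..<k}. g p i (t0 i)))))"
    apply (rule integral_sum[OF assms(1)])
    using assms(3) mk
    by (auto intro!: integrable_on_mult_right integrable_on_mult_left)
  also have "\<dots> = (\<Sum>p\<in>P. c p * (\<Prod>i<Suc m. integral {a i..b i} (g p i)) * (\<Prod>i\<in>{Suc m..<k}. g p i (t0 i)))"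
    by (simp add: integral_mult_right integral_mult_left mult_ac)
  finally show ?case .
qed

lemma mono_lt:
  fixes y :: "nat \<Rightarrow> real"
  assumes "\<And>i. i + 1 < n \<Longrightarrow> y i < y (i + 1)" "i < j" "j < n"
  shows "y i < y j"
  using assms(2,3)
proof (induction j)
  case 0 then show ?case by simp
next
  case (Suc j)
  show ?case
  proof (cases "i = j")
    case True then show ?thesis using assms(1)[of j] Suc.prems by simp
  next
    case False then have "y i < y j" using Suc by simp
    also have "y j < y (Suc j)" using assms(1)[of j] Suc.prems by simp
    finally show ?thesis .
  qed
qed

lemma det_row_scale:
  fixes r :: "nat \<Rightarrow> real"
  shows "Determinant.det (mat n n (\<lambda>(i, j). r i * f i j)) =
    (\<Prod>i<n. r i) * Determinant.det (mat n n (\<lambda>(i, j). f i j))"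
proof -
  have "Determinant.det (mat n n (\<lambda>(i, j). r i * f i j)) =
     (\<Sum>p\<in>{p. p permutes {0..<n}}. signof p * (\<Prod>i=0..<n. r i * f i (p i)))"
    by (subst det_def'[of _ n]) (auto intro!: sum.cong prod.cong simp: permutes_in_image)
  also have "\<dots> = (\<Sum>p\<in>{p. p permutes {0..<n}}. (\<Prod>i<n. r i) * (signof p * (\<Prod>i=0..<n. f i (p i))))"
    by (auto intro!: sum.cong simp: prod.distrib atLeast0LessThan)
  also have "\<dots> = (\<Prod>i<n. r i) * (\<Sum>p\<in>{p. p permutes {0..<n}}. signof p * (\<Prod>i=0..<n. f i (p i)))"
    by (simp add: sum_distrib_left)
  also have "(\<Sum>p\<in>{p. p permutes {0..<n}}. signof p * (\<Prod>i=0..<n. f i (p i))) = Determinant.det (mat n n (\<lambda>(i, j). f i j))"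
    by (subst det_def'[of _ n]) (auto intro!: sum.cong prod.cong simp: permutes_in_image)
  finally show ?thesis .
qed

lemma step2:
  fixes M :: "real mat"
  assumes M: "M \<in> carrier_mat n n" and n: "n > 0" and M0: "\<forall>i<n. M $$ (i,0) = 1"
  shows "Determinant.det M = Determinant.det (mat (n-1) (n-1) (\<lambda>(i,j). M $$ (i+1, j+1) - M $$ (i, j+1)))"
proof -
  define L :: "real mat" where "L = mat n n (\<lambda>(i,k). (if k = i then 1 else 0) - (if 0 < i \<and> k = i - 1 then 1 else 0))"
  define B where "B = L * M"
  have L: "L \<in> carrier_mat n n" by (simp add: L_def)
  have B: "B \<in> carrier_mat n n" using L M by (simp add: B_def)
  have dL: "diag_mat L = replicate n 1"
    by (rule nth_equalityI) (auto simp: diag_mat_def L_def)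
  have detL: "Determinant.det L = 1"
    by (subst det_lower_triangular[of n]) (auto simp: L dL, auto simp: L_def)
  have Bij: "B $$ (i,j) = M $$ (i,j) - (if i > 0 then M $$ (i-1,j) else 0)" if "i < n" "j < n" for i j
  proof -
    have "B $$ (i,j) = (\<Sum>k\<in>{0..<n}. ((if k = i then 1 else 0) - (if 0 < i \<and> k = i - 1 then 1 else 0)) * M $$ (k,j))"
      using that M by (simp add: B_def L_def scalar_prod_def)
    also have "\<dots> = (\<Sum>k\<in>{0..<n}. (if k = i then M $$ (k,j) else 0)) - (\<Sum>k\<in>{0..<n}. (if 0 < i \<and> k = i - 1 then M $$ (k,j) else 0))"
      by (subst sum_subtractf[symmetric]) (rule sum.cong, auto)
    also have "\<dots> = M $$ (i,j) - (if i > 0 then M $$ (i-1,j) else 0)"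
      using that by (cases "i > 0") auto
    finally show ?thesis .
  qed
  have "Determinant.det B = Determinant.det M"
    using det_mult[OF L M] detL by (simp add: B_def)
  moreover have "Determinant.det B = (\<Sum>i<n. B $$ (i,0) * cofactor B i 0)"
    using laplace_expansion_column[OF B n] .
  moreover have "(\<Sum>i<n. B $$ (i,0) * cofactor B i 0) = (\<Sum>i<n. if i = 0 then cofactor B 0 0 else 0)"
    using M0 n by (intro sum.cong) (auto simp: Bij)
  moreover have "mat_delete B 0 0 = mat (n-1) (n-1) (\<lambda>(i,j). M $$ (i+1, j+1) - M $$ (i, j+1))"
    using B by (intro eq_matI) (auto simp: mat_delete_def Bij)
  ultimately show ?thesis using n by (simp add: cofactor_def)
qed

theorem lemma1:
  fixes n :: nat and x y :: "nat \<Rightarrow> real"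
  assumes "n \<ge> 3"
    and "\<And>i. i + 1 < n \<Longrightarrow> x i < x (i + 1)"
    and "\<And>i. i + 1 < n \<Longrightarrow> y i < y (i + 1)"
  shows "Determinant.det (mat n n (\<lambda>(i, j). exp (x i * y j))) =
    exp ((\<Sum>i<n. x i) * y 0) * (\<Prod>j<n - 1. y (j + 1) - y 0) *
    iter_integral (n - 1) x (\<lambda>k. x (k + 1))
      (\<lambda>t. Determinant.det (mat (n - 1) (n - 1) (\<lambda>(i, j). exp (t i * (y (j + 1) - y 0)))))
      (\<lambda>_. 0)"
proof -
  define N where "N = n - 1"
  define u where "u j = y (j + 1) - y 0" for j
  define E where "E i j = exp (x (i+1) * u j) - exp (x i * u j)" for i j
  define PN where "PN = {p. p permutes {..<N}}"
  have nN: "n = Suc N" using assms(1) by (simp add: N_def)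
  have upos: "u j > 0" if "j < N" for j
    using mono_lt[of n y 0 "j+1", OF assms(3)] that nN by (simp add: u_def)
  have xle: "x i \<le> x (i + 1)" if "i < N" for i
    using assms(2)[of i] that nN by simp
  have fin: "finite PN" by (simp add: PN_def finite_permutations)
  have "Determinant.det (mat n n (\<lambda>(i, j). exp (x i * y j))) =
    Determinant.det (mat n n (\<lambda>(i, j). exp (x i * y 0) * exp (x i * (y j - y 0))))"
    by (simp add: exp_add[symmetric] algebra_simps)
  also have "\<dots> = (\<Prod>i<n. exp (x i * y 0)) * Determinant.det (mat n n (\<lambda>(i, j). exp (x i * (y j - y 0))))"
    by (rule det_row_scale)
  also have "(\<Prod>i<n. exp (x i * y 0)) = exp ((\<Sum>i<n. x i) * y 0)"
    by (simp add: exp_sum sum_distrib_right)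
  also have "Determinant.det (mat n n (\<lambda>(i, j). exp (x i * (y j - y 0)))) =
     Determinant.det (mat N N (\<lambda>(i, j). E i j))"
  proof -
    let ?M = "mat n n (\<lambda>(i, j). exp (x i * (y j - y 0)))"
    have "Determinant.det ?M = Determinant.det (mat (n-1) (n-1) (\<lambda>(i,j). ?M $$ (i+1, j+1) - ?M $$ (i, j+1)))"
      by (rule step2) (auto simp: nN)
    also have "mat (n-1) (n-1) (\<lambda>(i,j). ?M $$ (i+1, j+1) - ?M $$ (i, j+1)) = mat N N (\<lambda>(i, j). E i j)"
      by (intro eq_matI) (auto simp: nN E_def u_def)
    finally show ?thesis .
  qed
  finally have LHS: "Determinant.det (mat n n (\<lambda>(i, j). exp (x i * y j))) =
     exp ((\<Sum>i<n. x i) * y 0) * Determinant.det (mat N N (\<lambda>(i, j). E i j))" .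
  have detD: "Determinant.det (mat N N (\<lambda>(i, j). E i j)) = (\<Sum>p\<in>PN. signof p * (\<Prod>i<N. E i (p i)))"
    by (subst det_def'[of _ N]) (auto intro!: sum.cong prod.cong simp: permutes_in_image PN_def atLeast0LessThan)
  have F: "(\<lambda>t. Determinant.det (mat N N (\<lambda>(i, j). exp (t i * u j)))) =
     (\<lambda>t. \<Sum>p\<in>PN. signof p * (\<Prod>i<N. exp (t i * u (p i))))"
    by (rule ext, subst det_def'[of _ N]) (auto intro!: sum.cong prod.cong simp: permutes_in_image PN_def atLeast0LessThan)
  have intg: "integral {x i..x (i+1)} (\<lambda>s. exp (s * u (p i))) = E i (p i) / u (p i)"
    if "p \<in> PN" "i < N" for p i
  proof -
    have "p i < N" using permutes_in_image[of p "{..<N}" i] that by (simp add: PN_def)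
    then show ?thesis using int_exp[OF xle[OF \<open>i < N\<close>], of "u (p i)"] upos[of "p i"]
      by (auto simp: E_def intro!: integral_unique)
  qed
  have "iter_integral N x (\<lambda>k. x (k + 1)) (\<lambda>t. \<Sum>p\<in>PN. signof p * (\<Prod>i<N. exp (t i * u (p i)))) (\<lambda>_. 0)
     = (\<Sum>p\<in>PN. signof p * (\<Prod>i<N. integral {x i..x (i+1)} (\<lambda>s. exp (s * u (p i)))))"
  proof -
    have integ: "(\<lambda>s. exp (s * u (p i))) integrable_on {x i..x (i+1)}" if "p \<in> PN" "i < N" for p i
    proof -
      have "p i < N" using permutes_in_image[of p "{..<N}" i] that by (simp add: PN_def)
      then show ?thesis using int_exp[OF xle[OF \<open>i < N\<close>], of "u (p i)"] upos[of "p i"]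
        by (auto intro: has_integral_integrable)
    qed
    show ?thesis
      using iter_prod_sum[where g="\<lambda>p i s. exp (s * u (p i))" and a=x and b="\<lambda>k. x (k + 1)" and c=signof, OF fin order.refl] integ
      by simp
  qed
  also have "\<dots> = (\<Sum>p\<in>PN. signof p * (\<Prod>i<N. E i (p i) / u (p i)))"
    by (auto intro!: sum.cong prod.cong simp: intg[simplified])
  also have "\<dots> = (\<Sum>p\<in>PN. signof p * (\<Prod>i<N. E i (p i))) / (\<Prod>j<N. u j)"
  proof -
    have "(\<Prod>i<N. u (p i)) = (\<Prod>j<N. u j)" if "p \<in> PN" for p
      using prod.permute[of p "{..<N}" u] that by (simp add: PN_def)
    then show ?thesis
      by (simp add: sum_divide_distrib prod_dividef)
  qed
  finally have RHS: "iter_integral N x (\<lambda>k. x (k + 1)) (\<lambda>t. Determinant.det (mat N N (\<lambda>(i, j). exp (t i * u j)))) (\<lambda>_. 0)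
     = Determinant.det (mat N N (\<lambda>(i, j). E i j)) / (\<Prod>j<N. u j)"
    by (simp add: F detD)
  have "(\<Prod>j<N. u j) > 0" using upos by (intro prod_pos) auto
  then have "(\<Prod>j<N. u j) \<noteq> 0" by linarith
  then show ?thesis
    unfolding LHS N_def[symmetric] u_def[symmetric] RHS by simp
qed

end
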